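(* Let the problem, the cone $\mathcal{C}$ and the algorithm $\widetilde A$ be as in the context. Then: - $\widetilde A\in\mathcal{A}(\mathcal{C})$. - For every $f\in\mathcal{C}$ and $\varepsilon>0$, $\mathrm{cost}(\widetilde A,f,\varepsilon)=n_{j^*}$, where $j^*=\min\{j\in\mathbb{N}:\sigma_j(f)\le\varepsilon\sqrt{1-b^2}/(ab)\}$. - For all $\varepsilon,\rho>0$, $\mathrm{cost}(\widetilde A,\mathcal{C},\varepsilon,\rho)\le n_{j^\dagger}$ for some positive integer $j^\dagger$ satisfying $$j^\dagger\le\min\Big\{j\in\mathbb{N}:\frac{\rho^2}{\varepsilon^2}\le\frac{1-b^2}{a^2b^2}\Big[\sum_{k=1}^{j-1}\frac{b^{2(k-j)}}{a^2\lambda_{n_{k-1}+1}^2}+\frac{1}{\lambda_{n_{j-1}+1}^2}\Big]\Big\}.$$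
   Context: Let $\mathcal{F}$ and $\mathcal{G}$ be separable Hilbert spaces with orthonormal bases $(u_i)_{i\in\mathbb{N}}$ and $(v_i)_{i\in\mathbb{N}}$. Write $f=\sum_i\widehat f_iu_i$ with $\|f\|_{\mathcal{F}}=\|(\widehat f_i)_i\|_{\ell^2}$, and similarly for $\mathcal{G}$. Let $S:\mathcal{F}\to\mathcal{G}$ be the linear operator $S(f)=\sum_i\lambda_i\widehat f_iv_i$, where $\lambda_1\ge\lambda_2\ge\cdots>0$ and $\lambda_i\to0$. For $n\ge0$ let $A_n(f)=\sum_{i=1}^n\lambda_i\widehat f_iv_i$; it uses the $n$ values $\widehat f_1,\dots,\widehat f_n$. Let $\mathcal{B}_\rho=\{f:\|f\|_{\mathcal{F}}\le\rho\}$. For $\mathcal{H}\subseteq\mathcal{F}$, $\mathcal{A}(\mathcal{H})$ is the set of deterministic algorithms $A:\mathcal{H}\times(0,\infty)\to\mathcal{G}$, adaptively sampling finitely many bounded linear functionals of the input, with $\|S(f)-A(f,\varepsilon)\|_{\mathcal{G}}\le\varepsilon$ for all $f\in\mathcal{H}$ and all $\varepsilon>0$. $\mathrm{cost}(A,f,\varepsilon)$ is the number of linear functional values used to compute $A(f,\varepsilon)$, and $\mathrm{cost}(A,\mathcal{H},\varepsilon,\rho)=\sup\{\mathrm{cost}(A,f,\varepsilon):f\in\mathcal{H}\cap\mathcal{B}_\rho\}$. Let $n_0<n_1<n_2<\cdots$ be a strictly increasing, unbounded sequence of non-negative integers. For $j\in\mathbb{N}=\{1,2,\dots\}$ let $\sigma_j(f)=\|(\lambda_i\widehat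 f_i)_{i=n_{j-1}+1}^{n_j}\|_{\ell^2}$. Fix constants $0<b<1<a$ and define the cone $$\mathcal{C}=\{f\in\mathcal{F}:\sigma_{j+r}(f)\le ab^r\sigma_j(f)\ \forall j,r\in\mathbb{N}\}.$$ The algorithm $\widetilde A$ works as follows. Given $f\in\mathcal{C}$ and $\varepsilon>0$, for $j=1,2,\dots$ it computes $\sigma_j(f)$. At the first $j$ with $\sigma_j(f)\le\varepsilon\sqrt{1-b^2}/(ab)$, it returns $\widetilde A(f,\varepsilon)=A_{n_j}(f)$. *)

theory Defs
  imports "HOL-Analysis.Analysis"
begin

text \<open>Coordinates: an element f of the Hilbert space F is represented by its coefficient
sequence, 0-based: f i is the coefficient of u_(i+1); likewise lam i = lambda_(i+1).
Elements of G are represented by their coefficient sequences w.r.t. (v_i).\<close>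

definition inF :: "(nat \<Rightarrow> real) \<Rightarrow> bool" where
  "inF f \<longleftrightarrow> summable (\<lambda>i. (f i)\<^sup>2)"

definition l2norm :: "(nat \<Rightarrow> real) \<Rightarrow> real" where
  "l2norm f = sqrt (\<Sum>i. (f i)\<^sup>2)"

definition Sop :: "(nat \<Rightarrow> real) \<Rightarrow> (nat \<Rightarrow> real) \<Rightarrow> (nat \<Rightarrow> real)" where
  "Sop lam f = (\<lambda>i. lam i * f i)"

definition Atrunc :: "(nat \<Rightarrow> real) \<Rightarrow> nat \<Rightarrow> (nat \<Rightarrow> real) \<Rightarrow> (nat \<Rightarrow> real)" where
  "Atrunc lam m f = (\<lambda>i. if i < m then lam i * f i else 0)"

text \<open>sigma_j(f) = norm of (lambda_i f_i) for i = n_(j-1)+1 .. n_j (1-based), for j \<ge> 1.\<close>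
definition sigma :: "(nat \<Rightarrow> real) \<Rightarrow> (nat \<Rightarrow> nat) \<Rightarrow> (nat \<Rightarrow> real) \<Rightarrow> nat \<Rightarrow> real" where
  "sigma lam n f j = sqrt (\<Sum>i\<in>{n (j - 1)..<n j}. (lam i * f i)\<^sup>2)"

definition cone :: "(nat \<Rightarrow> real) \<Rightarrow> (nat \<Rightarrow> nat) \<Rightarrow> real \<Rightarrow> real \<Rightarrow> (nat \<Rightarrow> real) set" where
  "cone lam n a b = {f. inF f \<and>
      (\<forall>j\<ge>1. \<forall>r\<ge>1. sigma lam n f (j + r) \<le> a * b ^ r * sigma lam n f j)}"

definition thr :: "real \<Rightarrow> real \<Rightarrow> real \<Rightarrow> real" where
  "thr a b \<epsilon> = \<epsilon> * sqrt (1 - b\<^sup>2) / (a * b)"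

definition jstop :: "(nat \<Rightarrow> real) \<Rightarrow> (nat \<Rightarrow> nat) \<Rightarrow> real \<Rightarrow> real \<Rightarrow> (nat \<Rightarrow> real) \<Rightarrow> real \<Rightarrow> nat" where
  "jstop lam n a b f \<epsilon> = (LEAST j. j \<ge> 1 \<and> sigma lam n f j \<le> thr a b \<epsilon>)"

definition Atilde :: "(nat \<Rightarrow> real) \<Rightarrow> (nat \<Rightarrow> nat) \<Rightarrow> real \<Rightarrow> real \<Rightarrow> (nat \<Rightarrow> real) \<Rightarrow> real \<Rightarrow> (nat \<Rightarrow> real)" where
  "Atilde lam n a b f \<epsilon> = Atrunc lam (n (jstop lam n a b f \<epsilon>)) f"

text \<open>Indices (0-based) of the coefficients f_i sampled by A-tilde: computing
sigma_1,...,sigma_(j) and A_(n_j) uses exactly the coefficients 1..n_j, j = stopping index.\<close>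
definition sampled_Atilde :: "(nat \<Rightarrow> real) \<Rightarrow> (nat \<Rightarrow> nat) \<Rightarrow> real \<Rightarrow> real \<Rightarrow> (nat \<Rightarrow> real) \<Rightarrow> real \<Rightarrow> nat set" where
  "sampled_Atilde lam n a b f \<epsilon> =
     {i. i < n 0} \<union> (\<Union>j\<in>{1..jstop lam n a b f \<epsilon>}. {n (j - 1)..<n j})"

definition cost_Atilde :: "(nat \<Rightarrow> real) \<Rightarrow> (nat \<Rightarrow> nat) \<Rightarrow> real \<Rightarrow> real \<Rightarrow> (nat \<Rightarrow> real) \<Rightarrow> real \<Rightarrow> nat" where
  "cost_Atilde lam n a b f \<epsilon> = card (sampled_Atilde lam n a b f \<epsilon>)"

text \<open>The bracketed condition defining the bound on j-dagger (1-based k, j; 0-based lam).\<close>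
definition jdag_cond :: "(nat \<Rightarrow> real) \<Rightarrow> (nat \<Rightarrow> nat) \<Rightarrow> real \<Rightarrow> real \<Rightarrow> real \<Rightarrow> real \<Rightarrow> nat \<Rightarrow> bool" where
  "jdag_cond lam n a b \<epsilon> \<rho> j \<longleftrightarrow>
     \<rho>\<^sup>2 / \<epsilon>\<^sup>2 \<le> (1 - b\<^sup>2) / (a\<^sup>2 * b\<^sup>2) *
       ((\<Sum>k\<in>{1..<j}. b powi (2 * (int k - int j)) / (a\<^sup>2 * (lam (n (k - 1)))\<^sup>2))
        + 1 / (lam (n (j - 1)))\<^sup>2)"

end

theory Submission
  imports Defs
begin

lemma blocks_sum:
  fixes h :: "nat \<Rightarrow> real" and n :: "nat \<Rightarrow> nat"
  assumes "mono n"
  shows "sum h {n m..<n (m + R)} = (\<Sum>r\<in>{1..R}. sum h {n (m + r - 1)..<n (m + r)})"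
proof (induction R)
  case 0 then show ?case by simp
next
  case (Suc R)
  have le1: "n m \<le> n (m + R)" "n (m + R) \<le> n (m + Suc R)" using assms by (auto intro: monoD)
  have "sum h {n m..<n (m + Suc R)} = sum h {n m..<n (m + R)} + sum h {n (m+R)..<n (m + Suc R)}"
    by (simp only: sum.atLeastLessThan_concat[OF le1])
  then show ?case using Suc by (simp add: atLeastAtMostSuc_conv add.commute)
qed

lemma sampled_eq:
  fixes n :: "nat \<Rightarrow> nat"
  assumes "mono n"
  shows "{i. i < n 0} \<union> (\<Union>j\<in>{1..J}. {n (j - 1)..<n j}) = {..<n J}"
proof (induction J)
  case 0 then show ?case by auto
next
  case (Suc J)
  have "n J \<le> n (Suc J)" using assms by (auto intro: monoD)
  then have "{..<n J} \<union> {n J..<n (Suc J)} = {..<n (Suc J)}" by auto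
  then show ?case using Suc by (simp add: atLeastAtMostSuc_conv) blast
qed

lemma geom_sum:
  fixes q :: real
  assumes "0 \<le> q" "q < 1"
  shows "(\<Sum>r\<in>{1..R}. q ^ r) \<le> q / (1 - q)"
proof -
  have e: "(\<Sum>r\<in>{1..R}. q ^ r) * (1 - q) = q - q ^ Suc R"
  proof (induction R)
    case 0 then show ?case by simp
  next
    case (Suc R)
    have "(\<Sum>r\<in>{1..Suc R}. q ^ r) = (\<Sum>r\<in>{1..R}. q ^ r) + q ^ Suc R"
      by (simp add: atLeastAtMostSuc_conv)
    then have "(\<Sum>r\<in>{1..Suc R}. q ^ r) * (1 - q) = (\<Sum>r\<in>{1..R}. q ^ r) * (1 - q) + q ^ Suc R * (1 - q)"
      by (simp add: algebra_simps)
    also have "\<dots> = q - q ^ Suc (Suc R)" using Suc by (simp add: algebra_simps)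
    finally show ?case .
  qed
  have "(\<Sum>r\<in>{1..R}. q ^ r) = (q - q ^ Suc R) / (1 - q)"
    using assms e by (simp add: field_simps)
  also have "\<dots> \<le> q / (1 - q)" using assms by (simp add: divide_right_mono)
  finally show ?thesis .
qed

lemma sigma_sq:
  "(sigma lam n f j)\<^sup>2 = (\<Sum>i\<in>{n (j - 1)..<n j}. (lam i * f i)\<^sup>2)"
  unfolding sigma_def by (simp add: sum_nonneg)

lemma summable_g:
  fixes lam f :: "nat \<Rightarrow> real"
  assumes "\<forall>i. lam i > 0" "decseq lam" "inF f"
  shows "summable (\<lambda>i. (lam i * f i)\<^sup>2)"
proof (rule summable_comparison_test[where g="\<lambda>i. (lam 0)\<^sup>2 * (f i)\<^sup>2"])
  show "summable (\<lambda>i. (lam 0)\<^sup>2 * (f i)\<^sup>2)" using assms(3) unfolding inF_def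
    by (intro summable_mult)
  have "\<And>i. (lam i)\<^sup>2 \<le> (lam 0)\<^sup>2"
  proof -
    fix i
    have "lam i \<le> lam 0" using assms(2) by (simp add: decseqD)
    then show "(lam i)\<^sup>2 \<le> (lam 0)\<^sup>2" using assms(1) by (simp add: less_imp_le power_mono)
  qed
  then show "\<exists>N. \<forall>i\<ge>N. norm ((lam i * f i)\<^sup>2) \<le> (lam 0)\<^sup>2 * (f i)\<^sup>2"
    by (auto simp: power_mult_distrib intro!: mult_right_mono)
qed

lemma thr_pos:
  assumes "0 < b" "b < 1" "1 < a" "\<epsilon> > 0"
  shows "thr a b \<epsilon> > 0"
proof -
  have "b\<^sup>2 < 1" using assms by (simp add: power_less_one_iff)
  then show ?thesis using assms unfolding thr_def by simp
qed

lemma thr_sq: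
  assumes "0 < b" "b < 1" "1 < a"
  shows "(thr a b \<epsilon>)\<^sup>2 = \<epsilon>\<^sup>2 * (1 - b\<^sup>2) / (a\<^sup>2 * b\<^sup>2)"
proof -
  have "b\<^sup>2 < 1" using assms by (simp add: power_less_one_iff)
  then show ?thesis unfolding thr_def by (simp add: power_divide power_mult_distrib)
qed

lemma exists_stop:
  fixes lam f :: "nat \<Rightarrow> real" and n :: "nat \<Rightarrow> nat"
  assumes lam_pos: "\<forall>i. lam i > 0" and lam_dec: "decseq lam" and n_mono: "strict_mono n"
    and f: "inF f" and t: "t > 0"
  shows "\<exists>j\<ge>1. sigma lam n f j \<le> t"
proof (rule ccontr)
  assume "\<not> ?thesis"
  then have gt: "\<And>j. j \<ge> 1 \<Longrightarrow> sigma lam n f j > t" by force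
  define g where "g i = (lam i * f i)\<^sup>2" for i
  have sg: "summable g" unfolding g_def using summable_g[OF lam_pos lam_dec f] .
  obtain J :: nat where J: "suminf g / t\<^sup>2 < J" using reals_Archimedean2 by blast
  have mono_n: "mono n" using n_mono by (simp add: strict_mono_mono)
  have "real J * t\<^sup>2 = (\<Sum>r\<in>{1..J}. t\<^sup>2)" by simp
  also have "\<dots> \<le> (\<Sum>r\<in>{1..J}. (sigma lam n f r)\<^sup>2)"
  proof (rule sum_mono)
    fix r assume "r \<in> {1..J}"
    then have "sigma lam n f r > t" using gt by auto
    then show "t\<^sup>2 \<le> (sigma lam n f r)\<^sup>2" using t by (simp add: power_mono)
  qed
  also have "\<dots> = sum g {n 0..<n (0 + J)}"
    unfolding blocks_sum[OF mono_n] sigma_sq g_def by simp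
  also have "\<dots> \<le> sum g {..<n J}"
    by (rule sum_mono2) (auto simp: g_def)
  also have "\<dots> \<le> suminf g"
    using sg by (rule sum_le_suminf) (auto simp: g_def)
  finally have "real J * t\<^sup>2 \<le> suminf g" .
  moreover have "suminf g < J * t\<^sup>2" using J t by (simp add: field_simps)
  ultimately show False by simp
qed

lemma jstop_props:
  fixes lam f :: "nat \<Rightarrow> real" and n :: "nat \<Rightarrow> nat"
  assumes "\<exists>j\<ge>1. sigma lam n f j \<le> thr a b \<epsilon>"
  shows "jstop lam n a b f \<epsilon> \<ge> 1" "sigma lam n f (jstop lam n a b f \<epsilon>) \<le> thr a b \<epsilon>"
proof -
  from assms obtain j where "j \<ge> 1 \<and> sigma lam n f j \<le> thr a b \<epsilon>" by blast
  then have "1 \<le> jstop lam n a b f \<epsilon> \<and> sigma lam n f (jstop lam n a b f \<epsilon>) \<le> thr a b \<epsilon>"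
    unfolding jstop_def by (rule LeastI)
  then show "jstop lam n a b f \<epsilon> \<ge> 1" "sigma lam n f (jstop lam n a b f \<epsilon>) \<le> thr a b \<epsilon>"
    by auto
qed

lemma error_bound:
  fixes lam f :: "nat \<Rightarrow> real" and n :: "nat \<Rightarrow> nat"
  assumes lam_pos: "\<forall>i. lam i > 0" and lam_dec: "decseq lam" and n_mono: "strict_mono n"
    and b_pos: "0 < b" and b_lt1: "b < 1" and a_gt1: "1 < a"
    and fc: "f \<in> cone lam n a b" and e: "\<epsilon> > 0"
  shows "l2norm (\<lambda>i. Sop lam f i - Atilde lam n a b f \<epsilon> i) \<le> \<epsilon>"
proof -
  have f: "inF f" and cc: "\<And>j r. j \<ge> 1 \<Longrightarrow> r \<ge> 1 \<Longrightarrow> sigma lam n f (j + r) \<le> a * b ^ r * sigma lam n f j"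
    using fc unfolding cone_def by auto
  have ex: "\<exists>j\<ge>1. sigma lam n f j \<le> thr a b \<epsilon>"
    using exists_stop[OF lam_pos lam_dec n_mono f thr_pos[OF b_pos b_lt1 a_gt1 e]] .
  define J where "J = jstop lam n a b f \<epsilon>"
  have J1: "J \<ge> 1" and sJ: "sigma lam n f J \<le> thr a b \<epsilon>" using jstop_props[OF ex] unfolding J_def by auto
  define g where "g i = (lam i * f i)\<^sup>2" for i
  have sg: "summable g" unfolding g_def using summable_g[OF lam_pos lam_dec f] .
  define d where "d i = (Sop lam f i - Atilde lam n a b f \<epsilon> i)\<^sup>2" for i
  have d_eq: "d i = (if i < n J then 0 else g i)" for i
    unfolding d_def g_def Sop_def Atilde_def Atrunc_def J_def by simp
  have mono_n: "mono n" using n_mono by (simp add: strict_mono_mono)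
  have q0: "0 \<le> b\<^sup>2" and q1: "b\<^sup>2 < 1" using b_pos b_lt1 by (auto simp: power_less_one_iff)
  have sd: "summable d"
    by (rule summable_comparison_test[OF _ sg]) (auto simp: d_eq g_def)
  have part: "sum d {..<N} \<le> \<epsilon>\<^sup>2" for N
  proof -
    have "N \<le> n N" using seq_suble[OF n_mono] .
    also have "n N \<le> n (J + N)" using mono_n by (auto intro: monoD)
    finally have NM: "N \<le> n (J + N)" .
    have "sum d {..<N} \<le> sum d {..<n (J + N)}"
      using NM by (intro sum_mono2) (auto simp: d_eq g_def)
    also have "\<dots> = sum d {0..<n J} + sum d {n J..<n (J + N)}"
      using mono_n by (simp add: atLeast0LessThan[symmetric] sum.atLeastLessThan_concat monoD)
    also have "\<dots> = sum g {n J..<n (J + N)}"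
    proof -
      have "sum d {0..<n J} = 0" by (simp add: d_eq)
      moreover have "sum d {n J..<n (J + N)} = sum g {n J..<n (J + N)}"
        by (rule sum.cong) (auto simp: d_eq)
      ultimately show ?thesis by simp
    qed
    also have "\<dots> = (\<Sum>r\<in>{1..N}. (sigma lam n f (J + r))\<^sup>2)"
      unfolding blocks_sum[OF mono_n] sigma_sq g_def by simp
    also have "\<dots> \<le> (\<Sum>r\<in>{1..N}. a\<^sup>2 * (sigma lam n f J)\<^sup>2 * (b\<^sup>2) ^ r)"
    proof (rule sum_mono)
      fix r assume "r \<in> {1..N}"
      then have "sigma lam n f (J + r) \<le> a * b ^ r * sigma lam n f J" using cc J1 by auto
      moreover have "0 \<le> sigma lam n f (J + r)" unfolding sigma_def by (simp add: sum_nonneg)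
      ultimately have "(sigma lam n f (J + r))\<^sup>2 \<le> (a * b ^ r * sigma lam n f J)\<^sup>2"
        by (simp add: power_mono)
      then show "(sigma lam n f (J + r))\<^sup>2 \<le> a\<^sup>2 * (sigma lam n f J)\<^sup>2 * (b\<^sup>2) ^ r"
        by (simp add: power_mult_distrib power_mult[symmetric] mult.commute mult.left_commute)
    qed
    also have "\<dots> = a\<^sup>2 * (sigma lam n f J)\<^sup>2 * (\<Sum>r\<in>{1..N}. (b\<^sup>2) ^ r)"
      by (simp add: sum_distrib_left)
    also have "\<dots> \<le> a\<^sup>2 * (thr a b \<epsilon>)\<^sup>2 * (b\<^sup>2 / (1 - b\<^sup>2))"
    proof (rule mult_mono)
      have "0 \<le> sigma lam n f J" unfolding sigma_def by (simp add: sum_nonneg)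
      then have "(sigma lam n f J)\<^sup>2 \<le> (thr a b \<epsilon>)\<^sup>2" using sJ by (simp add: power_mono)
      then show "a\<^sup>2 * (sigma lam n f J)\<^sup>2 \<le> a\<^sup>2 * (thr a b \<epsilon>)\<^sup>2" by (simp add: mult_left_mono)
      show "(\<Sum>r\<in>{1..N}. (b\<^sup>2) ^ r) \<le> b\<^sup>2 / (1 - b\<^sup>2)" using geom_sum[OF q0 q1] .
    qed (auto simp: sum_nonneg)
    also have "\<dots> = \<epsilon>\<^sup>2"
      using thr_sq[OF b_pos b_lt1 a_gt1] q1 b_pos a_gt1 by (simp add: field_simps)
    finally show ?thesis .
  qed
  have "suminf d \<le> \<epsilon>\<^sup>2" using suminf_le_const[OF sd part] .
  then have "sqrt (suminf d) \<le> sqrt (\<epsilon>\<^sup>2)" by (rule real_sqrt_le_mono)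
  then show ?thesis using e unfolding l2norm_def d_def by simp
qed

lemma powi_neg:
  fixes b :: real
  assumes "k \<le> j"
  shows "b powi (2 * (int k - int j)) = inverse (b ^ (2 * (j - k)))"
proof -
  have "2 * (int k - int j) = - int (2 * (j - k))" using assms by simp
  moreover have "b powi (- int (2 * (j - k))) = inverse (b ^ (2 * (j - k)))"
    by (simp only: power_int_minus power_int_of_nat)
  ultimately show ?thesis by (simp only:)
qed

lemma key_bound:
  fixes lam f :: "nat \<Rightarrow> real" and n :: "nat \<Rightarrow> nat"
  assumes lam_pos: "\<forall>i. lam i > 0" and lam_dec: "decseq lam" and n_mono: "strict_mono n"
    and b_pos: "0 < b" and b_lt1: "b < 1" and a_gt1: "1 < a"
    and fc: "f \<in> cone lam n a b" and e: "\<epsilon> > 0"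
    and fn: "suminf (\<lambda>i. (f i)\<^sup>2) \<le> \<rho>\<^sup>2"
    and j1: "j \<ge> 1" and cond: "jdag_cond lam n a b \<epsilon> \<rho> j"
  shows "\<exists>k. 1 \<le> k \<and> k \<le> j \<and> sigma lam n f k \<le> thr a b \<epsilon>"
proof (rule ccontr)
  assume "\<not> ?thesis"
  then have gt: "\<And>k. 1 \<le> k \<Longrightarrow> k \<le> j \<Longrightarrow> sigma lam n f k > thr a b \<epsilon>" by force
  have f: "inF f" and cc: "\<And>j r. j \<ge> 1 \<Longrightarrow> r \<ge> 1 \<Longrightarrow> sigma lam n f (j + r) \<le> a * b ^ r * sigma lam n f j"
    using fc unfolding cone_def by auto
  define T where "T = thr a b \<epsilon>"
  have T0: "T > 0" unfolding T_def using thr_pos[OF b_pos b_lt1 a_gt1 e] .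
  define L where "L k = lam (n (k - 1))" for k
  have L0: "L k > 0" for k unfolding L_def using lam_pos by auto
  define h where "h k = (sigma lam n f k)\<^sup>2 / (L k)\<^sup>2" for k
  have mono_n: "mono n" using n_mono by (simp add: strict_mono_mono)
  have sf: "summable (\<lambda>i. (f i)\<^sup>2)" using f unfolding inF_def .
  have "(\<Sum>k\<in>{1..j}. h k) \<le> (\<Sum>k\<in>{1..j}. \<Sum>i\<in>{n (k - 1)..<n k}. (f i)\<^sup>2)"
  proof (rule sum_mono)
    fix k assume k: "k \<in> {1..j}"
    have "h k = (\<Sum>i\<in>{n (k - 1)..<n k}. (lam i * f i)\<^sup>2 / (L k)\<^sup>2)"
      unfolding h_def sigma_sq by (simp add: sum_divide_distrib)
    also have "\<dots> \<le> (\<Sum>i\<in>{n (k - 1)..<n k}. (f i)\<^sup>2)"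
    proof (rule sum_mono)
      fix i assume i: "i \<in> {n (k - 1)..<n k}"
      have "lam i \<le> L k" unfolding L_def using i lam_dec by (auto intro: decseqD)
      then have "(lam i)\<^sup>2 \<le> (L k)\<^sup>2" using lam_pos by (simp add: less_imp_le power_mono)
      then have "(lam i)\<^sup>2 * (f i)\<^sup>2 \<le> (L k)\<^sup>2 * (f i)\<^sup>2" by (simp add: mult_right_mono)
      then show "(lam i * f i)\<^sup>2 / (L k)\<^sup>2 \<le> (f i)\<^sup>2"
        using L0[of k] by (simp add: power_mult_distrib field_simps)
    qed
    finally show "h k \<le> (\<Sum>i\<in>{n (k - 1)..<n k}. (f i)\<^sup>2)" .
  qed
  also have "\<dots> = (\<Sum>i\<in>{n 0..<n (0 + j)}. (f i)\<^sup>2)"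
    unfolding blocks_sum[OF mono_n] by simp
  also have "\<dots> \<le> (\<Sum>i\<in>{..<n j}. (f i)\<^sup>2)"
    by (rule sum_mono2) auto
  also have "\<dots> \<le> suminf (\<lambda>i. (f i)\<^sup>2)"
    using sf by (rule sum_le_suminf) auto
  also have "\<dots> \<le> \<rho>\<^sup>2" using fn .
  finally have up: "(\<Sum>k\<in>{1..j}. h k) \<le> \<rho>\<^sup>2" .
  have split: "(\<Sum>k\<in>{1..j}. h k) = (\<Sum>k\<in>{1..<j}. h k) + h j"
  proof -
    have "{1..j} = insert j {1..<j}" using j1 by auto
    then show ?thesis by simp
  qed
  have lowk: "T\<^sup>2 * (b powi (2 * (int k - int j)) / (a\<^sup>2 * (L k)\<^sup>2)) \<le> h k"
    if k: "k \<in> {1..<j}" for k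
  proof -
    define m where "m = j - k"
    have m1: "m \<ge> 1" and jk: "j = k + m" using k unfolding m_def by auto
    have "T < sigma lam n f j" using gt j1 unfolding T_def by auto
    also have "\<dots> \<le> a * b ^ m * sigma lam n f k" using cc[of k m] k m1 jk by auto
    finally have "T < a * b ^ m * sigma lam n f k" .
    then have "T\<^sup>2 \<le> (a * b ^ m * sigma lam n f k)\<^sup>2" using T0 by (simp add: power_mono)
    then have "T\<^sup>2 \<le> a\<^sup>2 * b ^ (2 * m) * (sigma lam n f k)\<^sup>2"
      by (simp add: power_mult_distrib power_mult[symmetric] mult.commute)
    moreover have pos: "a\<^sup>2 * b ^ (2 * m) > 0" using a_gt1 b_pos by simp
    ultimately have "T\<^sup>2 / (a\<^sup>2 * b ^ (2 * m)) \<le> (sigma lam n f k)\<^sup>2"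
      by (simp add: divide_le_eq mult.commute)
    then have "T\<^sup>2 / (a\<^sup>2 * b ^ (2 * m)) / (L k)\<^sup>2 \<le> (sigma lam n f k)\<^sup>2 / (L k)\<^sup>2"
      by (rule divide_right_mono) simp
    then have "T\<^sup>2 / (a\<^sup>2 * b ^ (2 * m)) / (L k)\<^sup>2 \<le> h k"
      unfolding h_def .
    moreover have pw: "b powi (2 * (int k - int j)) = inverse (b ^ (2 * m))"
      using powi_neg[of k j b] k unfolding m_def by simp
    moreover have "T\<^sup>2 * (inverse (b ^ (2 * m)) / (a\<^sup>2 * (L k)\<^sup>2)) = T\<^sup>2 / (a\<^sup>2 * b ^ (2 * m)) / (L k)\<^sup>2"
      by (simp add: divide_inverse mult_ac)
    ultimately show ?thesis by simp
  qed
  have lowj: "T\<^sup>2 * (1 / (L j)\<^sup>2) < h j"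
  proof -
    have "T < sigma lam n f j" using gt j1 unfolding T_def by auto
    then have "T\<^sup>2 < (sigma lam n f j)\<^sup>2" using T0 by (simp add: power_strict_mono)
    then show ?thesis unfolding h_def using L0[of j] by (simp add: divide_strict_right_mono)
  qed
  have "T\<^sup>2 * ((\<Sum>k\<in>{1..<j}. b powi (2 * (int k - int j)) / (a\<^sup>2 * (L k)\<^sup>2)) + 1 / (L j)\<^sup>2)
      = (\<Sum>k\<in>{1..<j}. T\<^sup>2 * (b powi (2 * (int k - int j)) / (a\<^sup>2 * (L k)\<^sup>2))) + T\<^sup>2 * (1 / (L j)\<^sup>2)"
    by (simp add: distrib_left sum_distrib_left)
  also have "\<dots> < (\<Sum>k\<in>{1..<j}. h k) + h j"
  proof -
    have "(\<Sum>k\<in>{1..<j}. T\<^sup>2 * (b powi (2 * (int k - int j)) / (a\<^sup>2 * (L k)\<^sup>2))) \<le> (\<Sum>k\<in>{1..<j}. h k)"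
      by (rule sum_mono) (rule lowk)
    then show ?thesis using lowj by linarith
  qed
  also have "\<dots> \<le> \<rho>\<^sup>2" using up split by simp
  finally have A: "T\<^sup>2 * ((\<Sum>k\<in>{1..<j}. b powi (2 * (int k - int j)) / (a\<^sup>2 * (L k)\<^sup>2)) + 1 / (L j)\<^sup>2) < \<rho>\<^sup>2" .
  define B where "B = (\<Sum>k\<in>{1..<j}. b powi (2 * (int k - int j)) / (a\<^sup>2 * (L k)\<^sup>2)) + 1 / (L j)\<^sup>2"
  have C: "\<rho>\<^sup>2 / \<epsilon>\<^sup>2 \<le> (1 - b\<^sup>2) / (a\<^sup>2 * b\<^sup>2) * B"
    using cond unfolding jdag_cond_def B_def L_def .
  have "\<rho>\<^sup>2 \<le> \<epsilon>\<^sup>2 * ((1 - b\<^sup>2) / (a\<^sup>2 * b\<^sup>2) * B)"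
    using C e by (simp add: divide_le_eq mult.commute)
  also have "\<dots> = T\<^sup>2 * B" unfolding T_def thr_sq[OF b_pos b_lt1 a_gt1] by simp
  finally show False using A unfolding B_def by simp
qed

lemma exists_cond:
  fixes lam :: "nat \<Rightarrow> real" and n :: "nat \<Rightarrow> nat"
  assumes lam_pos: "\<forall>i. lam i > 0" and lam_lim: "lam \<longlonglongrightarrow> 0" and n_mono: "strict_mono n"
    and b_pos: "0 < b" and b_lt1: "b < 1" and a_gt1: "1 < a"
    and e: "\<epsilon> > 0" and r: "\<rho> > 0"
  shows "\<exists>j\<ge>1. jdag_cond lam n a b \<epsilon> \<rho> j"
proof -
  have q1: "b\<^sup>2 < 1" using b_pos b_lt1 by (simp add: power_less_one_iff)
  define C where "C = (1 - b\<^sup>2) / (a\<^sup>2 * b\<^sup>2)"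
  have C0: "C > 0" unfolding C_def using q1 b_pos a_gt1 by simp
  define t where "t = \<epsilon>\<^sup>2 * C / \<rho>\<^sup>2"
  have t0: "t > 0" unfolding t_def using C0 e r by simp
  have "eventually (\<lambda>i. lam i < sqrt t) sequentially"
    using order_tendstoD(2)[OF lam_lim] t0 by simp
  then obtain N where N: "\<And>i. i \<ge> N \<Longrightarrow> lam i < sqrt t" unfolding eventually_sequentially by blast
  define l where "l = lam (n N)"
  define Ssum where "Ssum = (\<Sum>k\<in>{1..<Suc N}. b powi (2 * (int k - int (Suc N))) / (a\<^sup>2 * (lam (n (k - 1)))\<^sup>2))"
  have l0: "l > 0" unfolding l_def using lam_pos by simp
  have "l < sqrt t" unfolding l_def using N seq_suble[OF n_mono, of N] by simp
  then have lt: "l\<^sup>2 < t" using l0 t0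
    by (metis less_imp_le power_strict_mono real_sqrt_pow2 zero_less_numeral)
  have "\<rho>\<^sup>2 / \<epsilon>\<^sup>2 = C / t" unfolding t_def using e r C0 by (simp add: field_simps)
  also have "\<dots> \<le> C / l\<^sup>2" using lt l0 C0 t0 by (intro divide_left_mono) auto
  also have "\<dots> \<le> C * (Ssum + 1 / l\<^sup>2)"
  proof -
    have "0 \<le> Ssum" unfolding Ssum_def
    proof (rule sum_nonneg)
      fix k assume "k \<in> {1..<Suc N}"
      have "0 \<le> b powi (2 * (int k - int (Suc N)))" using b_pos by (intro zero_le_power_int) simp
      moreover have "0 \<le> a\<^sup>2 * (lam (n (k - 1)))\<^sup>2" by simp
      ultimately show "0 \<le> b powi (2 * (int k - int (Suc N))) / (a\<^sup>2 * (lam (n (k - 1)))\<^sup>2)"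
        by (rule divide_nonneg_nonneg)
    qed
    then show ?thesis using C0 by (simp add: distrib_left)
  qed
  finally have fin: "\<rho>\<^sup>2 / \<epsilon>\<^sup>2 \<le> C * (Ssum + 1 / l\<^sup>2)" .
  have ll: "lam (n (Suc N - 1)) = l" by (simp add: l_def)
  have "jdag_cond lam n a b \<epsilon> \<rho> (Suc N)" unfolding jdag_cond_def
    using fin by (simp only: C_def Ssum_def ll)
  moreover have "Suc N \<ge> 1" by simp
  ultimately show ?thesis by (intro exI conjI)
qed

theorem theorem1:
  fixes lam :: "nat \<Rightarrow> real" and n :: "nat \<Rightarrow> nat" and a b :: real
  assumes lam_pos: "\<forall>i. lam i > 0"
    and lam_dec: "decseq lam"
    and lam_lim: "lam \<longlonglongrightarrow> 0"
    and n_mono: "strict_mono n"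
    and b_pos: "0 < b" and b_lt1: "b < 1" and a_gt1: "1 < a"
  shows
    "(\<forall>f\<in>cone lam n a b. \<forall>\<epsilon>>0.
        (\<exists>j\<ge>1. sigma lam n f j \<le> thr a b \<epsilon>) \<and>
        l2norm (\<lambda>i. Sop lam f i - Atilde lam n a b f \<epsilon> i) \<le> \<epsilon>)
   \<and> (\<forall>f\<in>cone lam n a b. \<forall>\<epsilon>>0.
        cost_Atilde lam n a b f \<epsilon> = n (LEAST j. j \<ge> 1 \<and> sigma lam n f j \<le> thr a b \<epsilon>))
   \<and> (\<forall>\<epsilon>>0. \<forall>\<rho>>0. \<exists>jd\<ge>1.
        (\<forall>f\<in>cone lam n a b. l2norm f \<le> \<rho> \<longrightarrow> cost_Atilde lam n a b f \<epsilon> \<le> n jd) \<and>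
        (\<exists>j\<ge>1. jdag_cond lam n a b \<epsilon> \<rho> j) \<and>
        (\<forall>j\<ge>1. jdag_cond lam n a b \<epsilon> \<rho> j \<longrightarrow> jd \<le> j))"
proof (intro conjI ballI allI impI)
  have mono_n: "mono n" using n_mono by (simp add: strict_mono_mono)
  have ex: "\<exists>j\<ge>1. sigma lam n f j \<le> thr a b \<epsilon>" if "f \<in> cone lam n a b" "\<epsilon> > 0" for f \<epsilon>
    using exists_stop[OF lam_pos lam_dec n_mono _ thr_pos[OF b_pos b_lt1 a_gt1 that(2)]] that(1)
    unfolding cone_def by auto
  have cost: "cost_Atilde lam n a b f \<epsilon> = n (jstop lam n a b f \<epsilon>)" for f \<epsilon>
    unfolding cost_Atilde_def sampled_Atilde_def sampled_eq[OF mono_n] by simp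
  fix f \<epsilon> assume f: "f \<in> cone lam n a b" and e: "(\<epsilon>::real) > 0"
  show "\<exists>j\<ge>1. sigma lam n f j \<le> thr a b \<epsilon>" using ex[OF f e] .
  show "l2norm (\<lambda>i. Sop lam f i - Atilde lam n a b f \<epsilon> i) \<le> \<epsilon>"
    using error_bound[OF lam_pos lam_dec n_mono b_pos b_lt1 a_gt1 f e] .
next
  have mono_n: "mono n" using n_mono by (simp add: strict_mono_mono)
  fix f \<epsilon> assume f: "f \<in> cone lam n a b" and e: "(\<epsilon>::real) > 0"
  show "cost_Atilde lam n a b f \<epsilon> = n (LEAST j. j \<ge> 1 \<and> sigma lam n f j \<le> thr a b \<epsilon>)"
    unfolding cost_Atilde_def sampled_Atilde_def sampled_eq[OF mono_n] jstop_def by simp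
next
  have mono_n: "mono n" using n_mono by (simp add: strict_mono_mono)
  fix \<epsilon> \<rho> :: real assume e: "\<epsilon> > 0" and r: "\<rho> > 0"
  have exc: "\<exists>j\<ge>1. jdag_cond lam n a b \<epsilon> \<rho> j"
    using exists_cond[OF lam_pos lam_lim n_mono b_pos b_lt1 a_gt1 e r] .
  define jd where "jd = (LEAST j. j \<ge> 1 \<and> jdag_cond lam n a b \<epsilon> \<rho> j)"
  have jd: "jd \<ge> 1 \<and> jdag_cond lam n a b \<epsilon> \<rho> jd"
    using exc unfolding jd_def by (metis (mono_tags, lifting) LeastI)
  have jdmin: "\<forall>j\<ge>1. jdag_cond lam n a b \<epsilon> \<rho> j \<longrightarrow> jd \<le> j"
    unfolding jd_def by (auto intro: Least_le)
  have costb: "cost_Atilde lam n a b f \<epsilon> \<le> n jd" if f: "f \<in> cone lam n a b" and fr: "l2norm f \<le> \<rho>" for f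
  proof -
    have sf: "summable (\<lambda>i. (f i)\<^sup>2)" using f unfolding cone_def inF_def by auto
    have S0: "0 \<le> suminf (\<lambda>i. (f i)\<^sup>2)" using sf by (intro suminf_nonneg) auto
    have "sqrt (suminf (\<lambda>i. (f i)\<^sup>2)) \<le> \<rho>" using fr unfolding l2norm_def .
    then have "(sqrt (suminf (\<lambda>i. (f i)\<^sup>2)))\<^sup>2 \<le> \<rho>\<^sup>2"
      by (rule power_mono) (simp add: S0)
    then have fn: "suminf (\<lambda>i. (f i)\<^sup>2) \<le> \<rho>\<^sup>2" using S0 by simp
    obtain k where k: "1 \<le> k" "k \<le> jd" "sigma lam n f k \<le> thr a b \<epsilon>"
      using key_bound[OF lam_pos lam_dec n_mono b_pos b_lt1 a_gt1 f e fn] jd by blast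
    have "jstop lam n a b f \<epsilon> \<le> k" unfolding jstop_def using k by (auto intro: Least_le)
    then have "jstop lam n a b f \<epsilon> \<le> jd" using k by simp
    then have "n (jstop lam n a b f \<epsilon>) \<le> n jd" using mono_n by (auto intro: monoD)
    then show ?thesis
      unfolding cost_Atilde_def sampled_Atilde_def sampled_eq[OF mono_n] by simp
  qed
  show "\<exists>jd\<ge>1.
        (\<forall>f\<in>cone lam n a b. l2norm f \<le> \<rho> \<longrightarrow> cost_Atilde lam n a b f \<epsilon> \<le> n jd) \<and>
        (\<exists>j\<ge>1. jdag_cond lam n a b \<epsilon> \<rho> j) \<and>
        (\<forall>j\<ge>1. jdag_cond lam n a b \<epsilon> \<rho> j \<longrightarrow> jd \<le> j)"
    using jd jdmin exc costb by blast
qed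

end
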